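(* Let $\beta>0$, $\kappa>0$, $\gamma=\beta/(\nu+2)$, $\nu\in(-1,1)$, and fix $\eta_{0,\infty}>0$ with $\frac{\beta(\nu+1)}{2(\nu+2)}<\eta_{0,\infty}^{\nu+3}<\beta$. For $s>0$ let $\eta_\infty(s)=s^{-2/(\nu+3)}\eta_{0,\infty}$ and let $(w_s,\eta_s)$ be the soliton-like traveling wave with speed $s$ and background $\eta_\infty(s)$, normalized so that $w_s(z)=s^{\frac{\nu+1}{\nu+3}}w_0(z)$, $\eta_s(z)=s^{-\frac{2}{\nu+3}}\eta_0(z)$, where $(w_0,\eta_0)$ is the soliton-like solution of $w_0-\eta_0^{-(\nu+2)}+\eta_{0,\infty}^{-(\nu+2)}=0$, $(\gamma-\kappa\partial_z^2)w_0+\eta_0-\eta_{0,\infty}=0$ with $w_0\to0$, $\eta_0\to\eta_{0,\infty}$ at $\pm\infty$. Then the momentum $I(s)=\int_{-\infty}^{\infty}w_s(z)\,[\eta_s(z)-\eta_\infty(s)]\,dz$ satisfies $$\frac{dI}{ds}=s^{-4/(\nu+3)}\,\frac{\nu-1}{\nu+3}\int_{-\infty}^{\infty}w_0(z)[\eta_0(z)-\eta_{0,\infty}]\,dz>0.$$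
   Context: A soliton-like traveling wave with speed $s$ and background $\eta_\infty>0$ is a non-constant smooth pair $(w_s,\eta_s)$ with $\eta_s>0$ satisfying $s w_s+\eta_\infty^{-(\nu+2)}-\eta_s^{-(\nu+2)}=0$, $(\gamma-\kappa\partial_z^2)w_s+s(\eta_s-\eta_\infty)=0$, $w_s\to0$, $\eta_s\to\eta_\infty$ as $|z|\to\infty$, with $\eta_s>\eta_\infty$ (homoclinic loop to the right of the saddle $(\eta_\infty,0)$ of the phase plane $(\eta_s,\eta_s')$). *)

theory Defs
  imports "HOL-Analysis.Analysis"
begin

definition smooth_fun :: "(real \<Rightarrow> real) \<Rightarrow> bool" where
  "smooth_fun f \<longleftrightarrow> (\<forall>n z. (deriv ^^ n) f differentiable (at z))"

text \<open>Soliton-like traveling wave with speed s and background eta_inf (parameters kappa, gamma, nu):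
  non-constant smooth pair (w, eta), eta > 0, satisfying the two ODE relations, decaying to
  (0, eta_inf) at both infinities, with eta > eta_inf (homoclinic loop right of the saddle).\<close>
definition soliton_tw ::
  "real \<Rightarrow> real \<Rightarrow> real \<Rightarrow> real \<Rightarrow> real \<Rightarrow> (real \<Rightarrow> real) \<Rightarrow> (real \<Rightarrow> real) \<Rightarrow> bool" where
  "soliton_tw \<kappa> \<gamma> \<nu> s \<eta>inf w \<eta> \<longleftrightarrow>
     smooth_fun w \<and> smooth_fun \<eta> \<and>
     \<not> ((\<exists>c. \<forall>z. w z = c) \<and> (\<exists>c. \<forall>z. \<eta> z = c)) \<and>
     (\<forall>z. \<eta> z > 0) \<and>
     (\<forall>z. s * w z + \<eta>inf powr (-(\<nu>+2)) - \<eta> z powr (-(\<nu>+2)) = 0) \<and>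
     (\<forall>z. \<gamma> * w z - \<kappa> * deriv (deriv w) z + s * (\<eta> z - \<eta>inf) = 0) \<and>
     (w \<longlongrightarrow> 0) at_top \<and> (w \<longlongrightarrow> 0) at_bot \<and>
     (\<eta> \<longlongrightarrow> \<eta>inf) at_top \<and> (\<eta> \<longlongrightarrow> \<eta>inf) at_bot \<and>
     (\<forall>z. \<eta> z > \<eta>inf)"

end

theory Submission
  imports Defs
begin


lemma tails_integrable:
  fixes g v' v'' :: "real \<Rightarrow> real" and a D :: real
  assumes gc: "continuous_on UNIV g" and g0: "\<And>z. g z \<ge> 0"
   and vc: "continuous_on UNIV v''"
   and dv: "\<And>z. (v' has_real_derivative v'' z) (at z)"
   and a0: "a \<ge> 0" and D0: "D \<ge> 0"
   and gle: "\<And>z. a \<le> \<bar>z\<bar> \<Longrightarrow> g z \<le> D * v'' z"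
   and r: "\<And>z. a \<le> z \<Longrightarrow> v' z \<le> 0" and l: "\<And>z. z \<le> -a \<Longrightarrow> v' z \<ge> 0"
  shows "g integrable_on UNIV"
proof -
  have intg: "\<And>x y. g integrable_on {x..y}"
    by (rule integrable_continuous_interval) (rule continuous_on_subset[OF gc], simp)
  have intv: "\<And>x y. v'' integrable_on {x..y}"
    by (rule integrable_continuous_interval) (rule continuous_on_subset[OF vc], simp)
  have ftc: "integral {x..y} v'' = v' y - v' x" if "x \<le> y" for x y
  proof -
    have "(v'' has_integral (v' y - v' x)) {x..y}"
      apply (rule fundamental_theorem_of_calculus[OF that])
      using dv by (metis has_real_derivative_iff_has_vector_derivative has_vector_derivative_at_within)
    thus ?thesis by (rule integral_unique)
  qed
  have right: "integral {a..k} g \<le> - D * v' a" if "a \<le> k" for k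
  proof -
    have "integral {a..k} g \<le> integral {a..k} (\<lambda>z. D * v'' z)"
      apply (rule integral_le[OF intg])
      using integrable_on_cmult_left[OF intv, of D] apply simp
      using gle a0 by auto
    also have "\<dots> = D * (v' k - v' a)" using ftc[OF that] by simp
    also have "\<dots> \<le> - D * v' a" using r[of k] that D0 by (simp add: algebra_simps mult_nonneg_nonpos)
    finally show ?thesis .
  qed
  have left: "integral {k..-a} g \<le> D * v' (-a)" if "k \<le> -a" for k
  proof -
    have "integral {k..-a} g \<le> integral {k..-a} (\<lambda>z. D * v'' z)"
      apply (rule integral_le[OF intg])
      using integrable_on_cmult_left[OF intv, of D] apply simp
      using gle a0 by auto
    also have "\<dots> = D * (v' (-a) - v' k)" using ftc[OF that] by simp
    also have "\<dots> \<le> D * v' (-a)" using l[of k] that D0 by (simp add: algebra_simps)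
    finally show ?thesis .
  qed
  define B where "B = integral {-a..a} g + D * v' (-a) - D * v' a"
  have bnd: "integral {-k..k} g \<le> B" for k :: real
  proof (cases "k \<le> a")
    case True
    have "integral {-k..k} g \<le> integral {-a..a} g"
      apply (rule integral_subset_le) using True intg g0 by auto
    moreover have "D * v' (-a) \<ge> 0" "D * v' a \<le> 0" using l[of "-a"] r[of a] D0
      by (auto simp: mult_nonneg_nonpos)
    ultimately show ?thesis unfolding B_def by linarith
  next
    case False
    have "integral {-k..k} g = integral {-k..-a} g + integral {-a..k} g"
      using Henstock_Kurzweil_Integration.integral_combine[where a="-k" and c="-a" and b=k and f=g] False a0 intg by auto
    also have "integral {-a..k} g = integral {-a..a} g + integral {a..k} g"
      using Henstock_Kurzweil_Integration.integral_combine[where a="-a" and c=a and b=k and f=g] False a0 intg by auto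
    finally show ?thesis using left[of "-k"] right[of k] False unfolding B_def by auto
  qed
  define f where "f = (\<lambda>k::nat. \<lambda>x. if x \<in> {-real k..real k} then g x else 0)"
  have "g integrable_on UNIV \<and> ((\<lambda>k. integral UNIV (f k)) \<longlongrightarrow> integral UNIV g) sequentially"
  proof (rule monotone_convergence_increasing)
    show "f k integrable_on UNIV" for k unfolding f_def integrable_restrict_UNIV by (rule intg)
    show "f k x \<le> f (Suc k) x" for k x unfolding f_def using g0[of x] by auto
    show "((\<lambda>k. f k x) \<longlongrightarrow> g x) sequentially" for x
    proof (rule tendsto_eventually)
      show "\<forall>\<^sub>F k in sequentially. f k x = g x"
        unfolding eventually_sequentially f_def
        apply (rule exI[of _ "nat \<lceil>\<bar>x\<bar>\<rceil>"])
        by auto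
    qed
    show "bounded (range (\<lambda>k. integral UNIV (f k)))"
      unfolding bounded_iff
    proof (intro exI ballI)
      fix y assume "y \<in> range (\<lambda>k. integral UNIV (f k))"
      then obtain k where y: "y = integral {-real k..real k} g"
        unfolding f_def integral_restrict_UNIV by auto
      have "y \<ge> 0" unfolding y by (rule integral_nonneg[OF intg]) (use g0 in auto)
      thus "norm y \<le> B" using bnd[of "real k"] y by auto
    qed
  qed
  thus ?thesis by blast
qed



lemma deriv_sign_right:
  fixes v v' v'' :: "real \<Rightarrow> real"
  assumes d1: "\<And>z. (v has_real_derivative v' z) (at z)"
    and d2: "\<And>z. (v' has_real_derivative v'' z) (at z)"
    and c: "\<And>z. a \<le> z \<Longrightarrow> v'' z \<ge> 0" and lim: "(v \<longlongrightarrow> 0) at_top" and ab: "a \<le> b"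
  shows "v' b \<le> 0"
proof (rule ccontr)
  assume "\<not> v' b \<le> 0" hence pos: "v' b > 0" by simp
  have mono: "v' b \<le> v' z" if "b \<le> z" for z
    by (rule DERIV_nonneg_imp_nondecreasing[OF that]) (use d2 c ab in fastforce)
  have lin: "v b + v' b * (z - b) \<le> v z" if "b \<le> z" for z
  proof -
    have "(\<lambda>x. v x - v' b * x) b \<le> (\<lambda>x. v x - v' b * x) z"
    proof (rule DERIV_nonneg_imp_nondecreasing[OF that])
      fix x assume "b \<le> x" "x \<le> z"
      show "\<exists>y. ((\<lambda>x. v x - v' b * x) has_real_derivative y) (at x) \<and> y \<ge> 0"
        by (rule exI[of _ "v' x - v' b"]) (auto intro!: derivative_eq_intros d1 mono \<open>b \<le> x\<close>)
    qed
    thus ?thesis by (simp add: algebra_simps)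
  qed
  have "\<forall>\<^sub>F z in at_top. v z < 1" using lim by (rule order_tendstoD) simp
  then obtain Z where Z: "\<And>z. z \<ge> Z \<Longrightarrow> v z < 1" unfolding eventually_at_top_linorder by blast
  define z where "z = max Z (b + (\<bar>v b\<bar> + 1) / v' b)"
  have "(\<bar>v b\<bar> + 1) / v' b > 0" using pos by simp
  hence zb: "b \<le> z" unfolding z_def by linarith
  have "v' b * (z - b) \<ge> \<bar>v b\<bar> + 1"
  proof -
    have "z - b \<ge> (\<bar>v b\<bar> + 1) / v' b" unfolding z_def by simp
    hence "v' b * (z - b) \<ge> v' b * ((\<bar>v b\<bar> + 1) / v' b)" using pos by (intro mult_left_mono) auto
    thus ?thesis using pos by simp
  qed
  hence "v z \<ge> 1" using lin[OF zb] by linarith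
  moreover have "v z < 1" using Z unfolding z_def by simp
  ultimately show False by simp
qed

lemma deriv_sign_left:
  fixes v v' v'' :: "real \<Rightarrow> real"
  assumes d1: "\<And>z. (v has_real_derivative v' z) (at z)"
    and d2: "\<And>z. (v' has_real_derivative v'' z) (at z)"
    and c: "\<And>z. z \<le> a \<Longrightarrow> v'' z \<ge> 0" and lim: "(v \<longlongrightarrow> 0) at_bot" and ab: "b \<le> a"
  shows "v' b \<ge> 0"
proof (rule ccontr)
  assume "\<not> v' b \<ge> 0" hence neg: "v' b < 0" by simp
  have mono: "v' z \<le> v' b" if "z \<le> b" for z
    by (rule DERIV_nonneg_imp_nondecreasing[OF that]) (use d2 c ab in fastforce)
  have lin: "v b + v' b * (z - b) \<le> v z" if "z \<le> b" for z
  proof -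
    have "(\<lambda>x. v' b * x - v x) z \<le> (\<lambda>x. v' b * x - v x) b"
    proof (rule DERIV_nonneg_imp_nondecreasing[OF that])
      fix x assume "z \<le> x" "x \<le> b"
      show "\<exists>y. ((\<lambda>x. v' b * x - v x) has_real_derivative y) (at x) \<and> y \<ge> 0"
        by (rule exI[of _ "v' b - v' x"]) (auto intro!: derivative_eq_intros d1 mono \<open>x \<le> b\<close>)
    qed
    thus ?thesis by (simp add: algebra_simps)
  qed
  have "\<forall>\<^sub>F z in at_bot. v z < 1" using lim by (rule order_tendstoD) simp
  then obtain Z where Z: "\<And>z. z \<le> Z \<Longrightarrow> v z < 1" unfolding eventually_at_bot_linorder by blast
  define z where "z = min Z (b - (\<bar>v b\<bar> + 1) / (- v' b))"
  have "(\<bar>v b\<bar> + 1) / (- v' b) > 0" using neg by (intro divide_pos_pos) auto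
  hence zb: "z \<le> b" unfolding z_def by linarith
  have "v' b * (z - b) \<ge> \<bar>v b\<bar> + 1"
  proof -
    have "b - z \<ge> (\<bar>v b\<bar> + 1) / (- v' b)" unfolding z_def by simp
    hence "(- v' b) * (b - z) \<ge> (- v' b) * ((\<bar>v b\<bar> + 1) / (- v' b))" using neg by (intro mult_left_mono) auto
    moreover have "(- v' b) * ((\<bar>v b\<bar> + 1) / (- v' b)) = \<bar>v b\<bar> + 1" using neg by simp
    ultimately show ?thesis by (simp add: algebra_simps)
  qed
  hence "v z \<ge> 1" using lin[OF zb] by linarith
  moreover have "v z < 1" using Z unfolding z_def by simp
  ultimately show False by simp
qed



lemma powr_ineq:
  fixes x y p :: real
  assumes "0 < x" "x < y" "p > 0"
  shows "p * (y - x) \<le> y powr (p + 1) * (x powr (-p) - y powr (-p))"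
proof -
  have "\<exists>z. x < z \<and> z < y \<and> y powr (-p) - x powr (-p) = (y - x) * (-p * z powr (-p - 1))"
    apply (rule MVT2[OF assms(2)])
    using assms has_real_derivative_powr[of _ "-p"] by auto
  then obtain z where z: "x < z" "z < y" "y powr (-p) - x powr (-p) = (y - x) * (-p * z powr (-p - 1))" by blast
  have "z powr (-p - 1) \<ge> y powr (-p - 1)" using z assms by (intro powr_mono2') auto
  hence "x powr (-p) - y powr (-p) \<ge> p * (y - x) * y powr (-p - 1)"
  proof -
    have "p * (y - x) * y powr (-p - 1) \<le> p * (y - x) * z powr (-p - 1)"
      using \<open>z powr (-p - 1) \<ge> y powr (-p - 1)\<close> assms by (intro mult_left_mono) auto
    moreover have "x powr (-p) - y powr (-p) = p * (y - x) * z powr (-p - 1)" using z(3) by (simp add: algebra_simps)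
    ultimately show ?thesis by simp
  qed
  hence "y powr (p + 1) * (x powr (-p) - y powr (-p)) \<ge> y powr (p + 1) * (p * (y - x) * y powr (-p - 1))"
    using assms by (intro mult_left_mono) auto
  moreover have "y powr (p + 1) * y powr (-p - 1) = 1" using assms
    by (simp add: powr_add[symmetric])
  ultimately show ?thesis by (simp add: algebra_simps)
qed

lemma deriv_funpow_cmult:
  assumes "smooth_fun f"
  shows "(deriv ^^ n) (\<lambda>z. c * f z) = (\<lambda>z. c * (deriv ^^ n) f z)"
proof (induction n)
  case 0 then show ?case by simp
next
  case (Suc n)
  have d: "((deriv ^^ n) f has_real_derivative deriv ((deriv ^^ n) f) z) (at z)" for z
    using assms unfolding smooth_fun_def DERIV_deriv_iff_real_differentiable by blast
  have "deriv (\<lambda>z. c * (deriv ^^ n) f z) = (\<lambda>z. c * deriv ((deriv ^^ n) f) z)"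
    by (rule ext, rule DERIV_imp_deriv) (auto intro!: derivative_eq_intros d)
  thus ?case using Suc by simp
qed

lemma smooth_cmult:
  assumes "smooth_fun f"
  shows "smooth_fun (\<lambda>z. c * f z)"
  unfolding smooth_fun_def deriv_funpow_cmult[OF assms]
  using assms unfolding smooth_fun_def by (auto intro!: derivative_intros)

lemma soliton_scaling:
  fixes \<kappa> \<gamma> \<nu> \<eta>0inf s :: real and w0 \<eta>0 :: "real \<Rightarrow> real"
  assumes sol: "soliton_tw \<kappa> \<gamma> \<nu> 1 \<eta>0inf w0 \<eta>0" and s: "s > 0" and nu: "-1 < \<nu>"
    and e: "\<eta>0inf > 0"
  shows "soliton_tw \<kappa> \<gamma> \<nu> s (s powr (-2 / (\<nu> + 3)) * \<eta>0inf)
           (\<lambda>z. s powr ((\<nu> + 1) / (\<nu> + 3)) * w0 z) (\<lambda>z. s powr (-2 / (\<nu> + 3)) * \<eta>0 z)"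
proof -
  define A where "A = s powr ((\<nu> + 1) / (\<nu> + 3))"
  define B where "B = s powr (-2 / (\<nu> + 3))"
  define K where "K = s powr (2 * (\<nu> + 2) / (\<nu> + 3))"
  have A0: "A > 0" and B0: "B > 0" and K0: "K > 0" using s by (auto simp: A_def B_def K_def)
  have n3: "\<nu> + 3 > 0" using nu by simp
  have sA: "s * A = K"
  proof -
    have "s * A = s powr (1 + (\<nu> + 1) / (\<nu> + 3))" using s by (simp add: A_def powr_add)
    also have "1 + (\<nu> + 1) / (\<nu> + 3) = 2 * (\<nu> + 2) / (\<nu> + 3)" using n3 by (simp add: field_simps)
    finally show ?thesis by (simp add: K_def)
  qed
  have sB: "s * B = A"
  proof -
    have "s * B = s powr (1 + (-2) / (\<nu> + 3))" using s by (simp add: B_def powr_diff powr_minus divide_inverse)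
    also have "1 + (-2) / (\<nu> + 3) = (\<nu> + 1) / (\<nu> + 3)" using n3 by (simp add: field_simps)
    finally show ?thesis by (simp add: A_def)
  qed
  have Bp: "B powr (-(\<nu> + 2)) = K"
  proof -
    have "B powr (-(\<nu> + 2)) = s powr (-2 / (\<nu> + 3) * (-(\<nu> + 2)))" by (simp add: B_def powr_powr)
    also have "-2 / (\<nu> + 3) * (-(\<nu> + 2)) = 2 * (\<nu> + 2) / (\<nu> + 3)" using n3 by (simp add: field_simps)
    finally show ?thesis by (simp add: K_def)
  qed
  from sol have sw: "smooth_fun w0" and se: "smooth_fun \<eta>0"
    and nc: "\<not> ((\<exists>c. \<forall>z. w0 z = c) \<and> (\<exists>c. \<forall>z. \<eta>0 z = c))"
    and pos: "\<forall>z. \<eta>0 z > 0"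
    and E1: "\<forall>z. 1 * w0 z + \<eta>0inf powr (-(\<nu>+2)) - \<eta>0 z powr (-(\<nu>+2)) = 0"
    and E2: "\<forall>z. \<gamma> * w0 z - \<kappa> * deriv (deriv w0) z + 1 * (\<eta>0 z - \<eta>0inf) = 0"
    and l1: "(w0 \<longlongrightarrow> 0) at_top" and l2: "(w0 \<longlongrightarrow> 0) at_bot"
    and l3: "(\<eta>0 \<longlongrightarrow> \<eta>0inf) at_top" and l4: "(\<eta>0 \<longlongrightarrow> \<eta>0inf) at_bot"
    and gt: "\<forall>z. \<eta>0 z > \<eta>0inf"
    unfolding soliton_tw_def by blast+
  have dd: "deriv (deriv (\<lambda>z. A * w0 z)) = (\<lambda>z. A * deriv (deriv w0) z)"
    using deriv_funpow_cmult[OF sw, where c=A and n="Suc (Suc 0)"] by simp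
  show ?thesis
    unfolding soliton_tw_def A_def[symmetric] B_def[symmetric]
  proof (intro conjI allI)
    show "smooth_fun (\<lambda>z. A * w0 z)" "smooth_fun (\<lambda>z. B * \<eta>0 z)"
      using sw se by (auto intro: smooth_cmult)
    show "\<not> ((\<exists>c. \<forall>z. A * w0 z = c) \<and> (\<exists>c. \<forall>z. B * \<eta>0 z = c))"
    proof
      assume "(\<exists>c. \<forall>z. A * w0 z = c) \<and> (\<exists>c. \<forall>z. B * \<eta>0 z = c)"
      then obtain c1 c2 where "\<forall>z. A * w0 z = c1" "\<forall>z. B * \<eta>0 z = c2" by blast
      hence "\<forall>z. w0 z = c1 / A" "\<forall>z. \<eta>0 z = c2 / B" using A0 B0 by (auto simp: field_simps)
      thus False using nc by blast
    qed
    fix z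
    show "B * \<eta>0 z > 0" using B0 pos by simp
    show "s * (A * w0 z) + (B * \<eta>0inf) powr (-(\<nu>+2)) - (B * \<eta>0 z) powr (-(\<nu>+2)) = 0"
    proof -
      have "(B * \<eta>0inf) powr (-(\<nu>+2)) = K * \<eta>0inf powr (-(\<nu>+2))"
        using B0 e Bp by (simp add: powr_mult)
      moreover have "(B * \<eta>0 z) powr (-(\<nu>+2)) = K * \<eta>0 z powr (-(\<nu>+2))"
        using B0 pos Bp by (simp add: powr_mult)
      moreover have "s * (A * w0 z) = K * w0 z" using sA by (metis mult.assoc)
      ultimately have "s * (A * w0 z) + (B * \<eta>0inf) powr (-(\<nu>+2)) - (B * \<eta>0 z) powr (-(\<nu>+2))
          = K * (1 * w0 z + \<eta>0inf powr (-(\<nu>+2)) - \<eta>0 z powr (-(\<nu>+2)))" by (simp add: algebra_simps)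
      thus ?thesis using E1 by simp
    qed
    show "\<gamma> * (A * w0 z) - \<kappa> * deriv (deriv (\<lambda>z. A * w0 z)) z + s * (B * \<eta>0 z - B * \<eta>0inf) = 0"
    proof -
      have "\<gamma> * (A * w0 z) - \<kappa> * deriv (deriv (\<lambda>z. A * w0 z)) z + s * (B * \<eta>0 z - B * \<eta>0inf)
          = A * (\<gamma> * w0 z - \<kappa> * deriv (deriv w0) z + 1 * (\<eta>0 z - \<eta>0inf))"
      proof -
        have "s * (B * \<eta>0 z - B * \<eta>0inf) = (s * B) * (\<eta>0 z - \<eta>0inf)" by (simp add: algebra_simps)
        thus ?thesis unfolding sB dd by (simp add: algebra_simps)
      qed
      thus ?thesis using E2 by simp
    qed
    show "B * \<eta>0inf < B * \<eta>0 z" using B0 gt by simp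
  next
    show "((\<lambda>z. A * w0 z) \<longlongrightarrow> 0) at_top" using tendsto_mult_left[OF l1, of A] by simp
    show "((\<lambda>z. A * w0 z) \<longlongrightarrow> 0) at_bot" using tendsto_mult_left[OF l2, of A] by simp
    show "((\<lambda>z. B * \<eta>0 z) \<longlongrightarrow> B * \<eta>0inf) at_top" using tendsto_mult_left[OF l3, of B] by simp
    show "((\<lambda>z. B * \<eta>0 z) \<longlongrightarrow> B * \<eta>0inf) at_bot" using tendsto_mult_left[OF l4, of B] by simp
  qed
qed


theorem mainTheorem10:
  fixes \<beta> \<kappa> \<gamma> \<nu> \<eta>0inf :: real and w0 \<eta>0 :: "real \<Rightarrow> real"
  assumes "\<beta> > 0" and "\<kappa> > 0" and "\<gamma> = \<beta> / (\<nu> + 2)"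
    and "-1 < \<nu>" and "\<nu> < 1"
    and "\<eta>0inf > 0"
    and "\<beta> * (\<nu> + 1) / (2 * (\<nu> + 2)) < \<eta>0inf powr (\<nu> + 3)"
    and "\<eta>0inf powr (\<nu> + 3) < \<beta>"
    and "soliton_tw \<kappa> \<gamma> \<nu> 1 \<eta>0inf w0 \<eta>0"
  defines "\<eta>inf \<equiv> (\<lambda>s::real. s powr (-2 / (\<nu> + 3)) * \<eta>0inf)"
    and "ws \<equiv> (\<lambda>s z::real. s powr ((\<nu> + 1) / (\<nu> + 3)) * w0 z)"
    and "\<eta>s \<equiv> (\<lambda>s z::real. s powr (-2 / (\<nu> + 3)) * \<eta>0 z)"
    and "I \<equiv> (\<lambda>s::real. integral UNIV (\<lambda>z. s powr ((\<nu> + 1) / (\<nu> + 3)) * w0 z *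
              (s powr (-2 / (\<nu> + 3)) * \<eta>0 z - s powr (-2 / (\<nu> + 3)) * \<eta>0inf)))"
  shows "\<forall>s>0. soliton_tw \<kappa> \<gamma> \<nu> s (\<eta>inf s) (ws s) (\<eta>s s) \<and>
           (I has_real_derivative
              s powr (-4 / (\<nu> + 3)) * ((\<nu> - 1) / (\<nu> + 3)) *
                integral UNIV (\<lambda>z. w0 z * (\<eta>0 z - \<eta>0inf))) (at s) \<and>
           s powr (-4 / (\<nu> + 3)) * ((\<nu> - 1) / (\<nu> + 3)) *
                integral UNIV (\<lambda>z. w0 z * (\<eta>0 z - \<eta>0inf)) > 0"
  proof -
  have p0: "\<nu> + 2 > 0" using assms(4) by simp
  have n3: "\<nu> + 3 > 0" using assms(4) by simp
  from assms(9) have sw: "smooth_fun w0" and se: "smooth_fun \<eta>0"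
    and pos: "\<forall>z. \<eta>0 z > 0"
    and E1: "\<forall>z. 1 * w0 z + \<eta>0inf powr (-(\<nu>+2)) - \<eta>0 z powr (-(\<nu>+2)) = 0"
    and E2: "\<forall>z. \<gamma> * w0 z - \<kappa> * deriv (deriv w0) z + 1 * (\<eta>0 z - \<eta>0inf) = 0"
    and l1: "(w0 \<longlongrightarrow> 0) at_top" and l2: "(w0 \<longlongrightarrow> 0) at_bot"
    and l3: "(\<eta>0 \<longlongrightarrow> \<eta>0inf) at_top" and l4: "(\<eta>0 \<longlongrightarrow> \<eta>0inf) at_bot"
    and gt: "\<forall>z. \<eta>0 z > \<eta>0inf"
    unfolding soliton_tw_def by blast+
  have dif0: "w0 differentiable (at z)" "\<eta>0 differentiable (at z)" for z
    using sw se unfolding smooth_fun_def by (metis funpow_0)+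
  have dif1: "deriv w0 differentiable (at z)" for z
    using sw unfolding smooth_fun_def by (metis funpow_0 funpow_Suc_right o_apply)
  have dif2: "deriv (deriv w0) differentiable (at z)" for z
    using sw unfolding smooth_fun_def by (metis funpow_0 funpow_Suc_right o_apply)
  have d1: "(w0 has_real_derivative deriv w0 z) (at z)" for z
    using dif0 DERIV_deriv_iff_real_differentiable by blast
  have d2: "(deriv w0 has_real_derivative deriv (deriv w0) z) (at z)" for z
    using dif1 DERIV_deriv_iff_real_differentiable by blast
  have cw: "continuous_on UNIV w0" "continuous_on UNIV \<eta>0" "continuous_on UNIV (deriv (deriv w0))"
    using dif0 dif2 by (auto intro!: differentiable_imp_continuous_on simp: differentiable_on_def)
  define u where "u = (\<lambda>z. - w0 z)"
  define g where "g = (\<lambda>z. u z * (\<eta>0 z - \<eta>0inf))"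
  have key: "(\<nu> + 2) * (\<eta>0 z - \<eta>0inf) \<le> \<eta>0 z powr (\<nu> + 3) * u z" for z
  proof -
    have "(\<nu> + 2) * (\<eta>0 z - \<eta>0inf) \<le> \<eta>0 z powr ((\<nu> + 2) + 1) * (\<eta>0inf powr (-(\<nu>+2)) - \<eta>0 z powr (-(\<nu>+2)))"
      by (rule powr_ineq) (use assms(6) gt p0 in auto)
    moreover have "u z = \<eta>0inf powr (-(\<nu>+2)) - \<eta>0 z powr (-(\<nu>+2))" using E1 unfolding u_def by (simp add: algebra_simps)
    moreover have "(\<nu> + 2) + 1 = \<nu> + 3" by simp
    ultimately show ?thesis by simp
  qed
  have upos: "u z > 0" for z
  proof -
    have "0 < (\<nu> + 2) * (\<eta>0 z - \<eta>0inf)" using p0 gt by simp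
    also have "\<dots> \<le> \<eta>0 z powr (\<nu> + 3) * u z" by (rule key)
    finally show ?thesis using pos by (simp add: zero_less_mult_iff)
  qed
  have E2': "(\<nu> + 2) * \<kappa> * (- deriv (deriv w0) z) = \<beta> * u z - (\<nu> + 2) * (\<eta>0 z - \<eta>0inf)" for z
  proof -
    have "\<kappa> * (- deriv (deriv w0) z) = \<gamma> * u z - (\<eta>0 z - \<eta>0inf)" using E2[rule_format, of z] unfolding u_def by simp
    hence "(\<nu> + 2) * (\<kappa> * (- deriv (deriv w0) z)) = (\<nu> + 2) * \<gamma> * u z - (\<nu> + 2) * (\<eta>0 z - \<eta>0inf)"
      by (simp add: algebra_simps)
    moreover have "(\<nu> + 2) * \<gamma> = \<beta>" using assms(3) p0 by simp
    ultimately show ?thesis by (simp add: mult.assoc)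
  qed
  define \<beta>2 where "\<beta>2 = (\<eta>0inf powr (\<nu> + 3) + \<beta>) / 2"
  have b2: "\<eta>0inf powr (\<nu> + 3) < \<beta>2" "\<beta>2 < \<beta>" using assms(8) unfolding \<beta>2_def by auto
  define P where "P = (\<lambda>z. \<eta>0 z powr (\<nu> + 3) < \<beta>2 \<and> \<eta>0 z < \<eta>0inf + 1)"
  have evt: "\<forall>\<^sub>F z in F. P z" if "(\<eta>0 \<longlongrightarrow> \<eta>0inf) F" for F
  proof -
    have "((\<lambda>z. \<eta>0 z powr (\<nu> + 3)) \<longlongrightarrow> \<eta>0inf powr (\<nu> + 3)) F"
      by (rule tendsto_powr[OF that tendsto_const]) (use assms(6) in simp)
    hence "\<forall>\<^sub>F z in F. \<eta>0 z powr (\<nu> + 3) < \<beta>2" using b2(1) by (rule order_tendstoD)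
    moreover have "\<forall>\<^sub>F z in F. \<eta>0 z < \<eta>0inf + 1" using that by (rule order_tendstoD) simp
    ultimately show ?thesis unfolding P_def by (rule eventually_conj)
  qed
  obtain Z1 where Z1: "\<And>z. z \<ge> Z1 \<Longrightarrow> P z" using evt[OF l3] unfolding eventually_at_top_linorder by blast
  obtain Z2 where Z2: "\<And>z. z \<le> Z2 \<Longrightarrow> P z" using evt[OF l4] unfolding eventually_at_bot_linorder by blast
  define a where "a = max 0 (max Z1 (- Z2))"
  have a0: "a \<ge> 0" unfolding a_def by simp
  have Pa: "P z" if "a \<le> \<bar>z\<bar>" for z
  proof (cases "z \<ge> 0")
    case True thus ?thesis using that Z1 unfolding a_def by auto
  next
    case False thus ?thesis using that Z2 unfolding a_def by auto
  qed
  define \<delta> where "\<delta> = \<beta> - \<beta>2"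
  have d0: "\<delta> > 0" using b2 unfolding \<delta>_def by simp
  have lowb: "\<delta> * u z \<le> (\<nu> + 2) * \<kappa> * (- deriv (deriv w0) z)" if "a \<le> \<bar>z\<bar>" for z
  proof -
    have "\<eta>0 z powr (\<nu> + 3) * u z \<le> \<beta>2 * u z" using Pa[OF that] upos[of z] unfolding P_def
      by (intro mult_right_mono) auto
    thus ?thesis using key[of z] E2'[of z] unfolding \<delta>_def by (simp add: algebra_simps)
  qed
  have v''nn: "- deriv (deriv w0) z \<ge> 0" if "a \<le> \<bar>z\<bar>" for z
  proof -
    have "0 \<le> \<delta> * u z" using d0 upos[of z] by simp
    also have "\<dots> \<le> (\<nu> + 2) * \<kappa> * (- deriv (deriv w0) z)" by (rule lowb[OF that])
    finally have "0 \<le> ((\<nu> + 2) * \<kappa>) * (- deriv (deriv w0) z)" .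
    moreover have "(\<nu> + 2) * \<kappa> > 0" using p0 assms(2) by simp
    ultimately show ?thesis using zero_le_mult_iff by (metis less_le_not_le)
  qed
  define D where "D = (\<nu> + 2) * \<kappa> / \<delta>"
  have D0: "D \<ge> 0" unfolding D_def using p0 assms(2) d0 by simp
  have gle: "g z \<le> D * (- deriv (deriv w0) z)" if "a \<le> \<bar>z\<bar>" for z
  proof -
    have "g z \<le> u z" unfolding g_def using Pa[OF that] upos[of z] unfolding P_def
      by (simp add: mult_left_le)
    also have "u z \<le> D * (- deriv (deriv w0) z)"
      using lowb[OF that] d0 unfolding D_def by (simp add: field_simps)
    finally show ?thesis .
  qed
  have du: "(u has_real_derivative (- deriv w0 z)) (at z)" for z
    unfolding u_def by (auto intro!: derivative_eq_intros d1)
  have du': "((\<lambda>z. - deriv w0 z) has_real_derivative (- deriv (deriv w0) z)) (at z)" for z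
    by (auto intro!: derivative_eq_intros d2)
  have ul1: "(u \<longlongrightarrow> 0) at_top" unfolding u_def using tendsto_minus[OF l1] by simp
  have ul2: "(u \<longlongrightarrow> 0) at_bot" unfolding u_def using tendsto_minus[OF l2] by simp
  have gnn: "0 \<le> g z" for z unfolding g_def using upos[of z] gt[rule_format, of z] by (intro mult_nonneg_nonneg) auto
  have gint: "g integrable_on UNIV"
  proof (rule tails_integrable[where v'="\<lambda>z. - deriv w0 z" and v''="\<lambda>z. - deriv (deriv w0) z" and a=a and D=D])
    show "continuous_on UNIV g" unfolding g_def u_def using cw by (auto intro!: continuous_intros)
    show "0 \<le> g z" for z by (rule gnn)
    show "continuous_on UNIV (\<lambda>z. - deriv (deriv w0) z)" using cw by (auto intro!: continuous_intros)
    show "((\<lambda>z. - deriv w0 z) has_real_derivative - deriv (deriv w0) z) (at z)" for z by (rule du')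
    show "0 \<le> a" "0 \<le> D" by (rule a0, rule D0)
    show "g z \<le> D * - deriv (deriv w0) z" if "a \<le> \<bar>z\<bar>" for z using gle[OF that] by simp
    show "- deriv w0 z \<le> 0" if "a \<le> z" for z
      by (rule deriv_sign_right[OF du du' _ ul1 that]) (use v''nn a0 in auto)
    show "0 \<le> - deriv w0 z" if "z \<le> - a" for z
      by (rule deriv_sign_left[OF du du' _ ul2 that]) (use v''nn a0 in auto)
  qed
  define J where "J = integral UNIV (\<lambda>z. w0 z * (\<eta>0 z - \<eta>0inf))"
  have Jg: "J = - integral UNIV g"
  proof -
    have "(\<lambda>z. w0 z * (\<eta>0 z - \<eta>0inf)) = (\<lambda>z. - g z)" unfolding g_def u_def by auto
    thus ?thesis unfolding J_def by simp
  qed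
  have Jint: "(\<lambda>z. w0 z * (\<eta>0 z - \<eta>0inf)) integrable_on UNIV"
  proof -
    have "(\<lambda>z. w0 z * (\<eta>0 z - \<eta>0inf)) = (\<lambda>z. - g z)" unfolding g_def u_def by auto
    thus ?thesis using integrable_neg[OF gint] by simp
  qed
  have gpos: "integral UNIV g > 0"
  proof -
    have gc: "continuous_on {0..1} g" unfolding g_def u_def using cw
      by (auto intro!: continuous_intros intro: continuous_on_subset)
    obtain x where x: "x \<in> {0..1::real}" "\<And>y. y \<in> {0..1} \<Longrightarrow> g x \<le> g y"
      using continuous_attains_inf[OF compact_Icc _ gc] by auto
    have gx: "g x > 0" unfolding g_def using upos[of x] gt[rule_format, of x] by (intro mult_pos_pos) auto
    have "g x = integral {0..1::real} (\<lambda>_. g x)" by (simp add: integral_const_real)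
    also have "\<dots> \<le> integral {0..1} g"
      by (rule integral_le) (use x gc integrable_continuous_interval in auto)
    also have "\<dots> \<le> integral UNIV g"
      by (rule integral_subset_le) (use gint gc integrable_continuous_interval gnn in auto)
    finally show ?thesis using gx by simp
  qed
  have Jneg: "J < 0" using Jg gpos by simp
  define c where "c = (\<nu> - 1) / (\<nu> + 3)"
  have Ieq: "I = (\<lambda>s. s powr c * J)"
  proof
    fix s
    have "I s = integral UNIV (\<lambda>z. (s powr ((\<nu> + 1) / (\<nu> + 3)) * s powr (-2 / (\<nu> + 3))) * (w0 z * (\<eta>0 z - \<eta>0inf)))"
      unfolding I_def by (simp add: algebra_simps)
    also have "\<dots> = (s powr ((\<nu> + 1) / (\<nu> + 3)) * s powr (-2 / (\<nu> + 3))) * J"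
      unfolding J_def using integral_mult[OF Jint] by simp
    also have "s powr ((\<nu> + 1) / (\<nu> + 3)) * s powr (-2 / (\<nu> + 3)) = s powr ((\<nu> + 1) / (\<nu> + 3) + -2 / (\<nu> + 3))"
      by (rule powr_add[symmetric])
    also have "(\<nu> + 1) / (\<nu> + 3) + -2 / (\<nu> + 3) = c"
    proof -
      have "(\<nu> + 1) / (\<nu> + 3) + -2 / (\<nu> + 3) = ((\<nu> + 1) + -2) / (\<nu> + 3)" by (rule add_divide_distrib[symmetric])
      thus ?thesis unfolding c_def by simp
    qed
    finally show "I s = s powr c * J" .
  qed
  show ?thesis
  proof (intro allI impI conjI)
    fix s :: real assume s: "s > 0"
    show "soliton_tw \<kappa> \<gamma> \<nu> s (\<eta>inf s) (ws s) (\<eta>s s)"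
      unfolding \<eta>inf_def ws_def \<eta>s_def using soliton_scaling[OF assms(9) s assms(4) assms(6)] by simp
    have "(I has_real_derivative c * s powr (c - 1) * J) (at s)"
      unfolding Ieq by (auto intro!: derivative_eq_intros has_real_derivative_powr s)
    moreover have "c - 1 = -4 / (\<nu> + 3)" unfolding c_def using n3 by (simp add: field_simps)
    ultimately show "(I has_real_derivative s powr (-4 / (\<nu> + 3)) * ((\<nu> - 1) / (\<nu> + 3)) *
                integral UNIV (\<lambda>z. w0 z * (\<eta>0 z - \<eta>0inf))) (at s)"
      unfolding J_def c_def by (simp add: algebra_simps)
    have "(\<nu> - 1) / (\<nu> + 3) < 0" using assms(5) n3 by (simp add: divide_neg_pos)
    moreover have "s powr (-4 / (\<nu> + 3)) > 0" using s by simp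
    ultimately show "s powr (-4 / (\<nu> + 3)) * ((\<nu> - 1) / (\<nu> + 3)) *
                integral UNIV (\<lambda>z. w0 z * (\<eta>0 z - \<eta>0inf)) > 0"
    proof -
      have "(\<nu> - 1) / (\<nu> + 3) * J > 0" using \<open>(\<nu> - 1) / (\<nu> + 3) < 0\<close> Jneg by (rule mult_neg_neg)
      hence "s powr (-4 / (\<nu> + 3)) * ((\<nu> - 1) / (\<nu> + 3) * J) > 0"
        using \<open>s powr (-4 / (\<nu> + 3)) > 0\<close> by (rule mult_pos_pos[rotated])
      thus ?thesis unfolding J_def by (simp only: mult.assoc)
    qed
  qed
qed

end
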